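(* Let $(\Omega,\mathcal{F},\mathbb{P})$ be a probability space, let $X_{n,m}\colon\Omega\to[0,1]$, $n,m\in\mathbb{N}$, be i.i.d. random variables that are continuous uniformly distributed on $[0,1]$, let $f\colon\mathbb{R}^2\to\mathbb{R}$ be given by $f(\theta)=\int_0^1|\theta_2\max(\theta_1x,0)-\sin(x)|^2\,dx$ for $\theta=(\theta_1,\theta_2)\in\mathbb{R}^2$, let $F\colon\mathbb{R}^2\times[0,1]\to\mathbb{R}$ be given by $F(\theta,x)=|\theta_2\max(\theta_1x,0)-\sin(x)|^2$, and let $\mathcal{M}=\{\theta\in\mathbb{R}^2\colon f(\theta)=\inf_{\vartheta\in\mathbb{R}^2}f(\vartheta)\}$. Then: $f(\theta)=\mathbb{E}[F(\theta,X_{1,1})]$ and $\mathbb{E}[|F(\theta,X_{1,1})|^2]<\infty$ for every $\theta\in\mathbb{R}^2$; for every $x\in[0,1]$ the map $\theta\mapsto F(\theta,x)$ is locally Lipschitz continuous; and there exists an open set $U\subseteq\mathbb{R}^2$ such that $f|_U$ is three times continuously differentiable, for every non-empty compact $\mathfrak{C}\subseteq U$ it holds that $\sup_{\theta\in\mathfrak{C}}\mathbb{E}[|F(\theta,X_{1,1})|^2+|(\nabla_\theta F)(\theta,X_{1,1})|^2]<\infty$, $\mathcal{M}\cap U$ is a non-empty $1$-dimensional $C^1$-submanifold of $\mathbb{R}^2$, and $\operatorname{rank}((\operatorname{Hess}f)(\theta))=1$ for every $\theta\in\mathcal{M}\cap U$.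
   Context: $\nabla_\theta F$ denotes the gradient of $F$ with respect to $\theta$. *)

theory Defs
  imports "HOL-Analysis.Analysis" "HOL-Probability.Probability"
begin

definition grad :: "(real^'n \<Rightarrow> real) \<Rightarrow> real^'n \<Rightarrow> real^'n" where
  "grad f x = (\<chi> i. frechet_derivative f (at x) (axis i 1))"

definition hessian :: "(real^'n \<Rightarrow> real) \<Rightarrow> real^'n \<Rightarrow> real^'n^'n" where
  "hessian f x = jacobian (grad f) (at x)"

fun Ck_on :: "nat \<Rightarrow> (real^'n) set \<Rightarrow> (real^'n \<Rightarrow> real) \<Rightarrow> bool" where
  "Ck_on 0 U f = continuous_on U f"
| "Ck_on (Suc k) U f =
     (\<exists>g. (\<forall>x\<in>U. (f has_derivative (\<lambda>h. g x \<bullet> h)) (at x)) \<and>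
          (\<forall>i. Ck_on k U (\<lambda>x. g x $ i)))"

definition C1_submanifold :: "nat \<Rightarrow> (real^'n) set \<Rightarrow> bool" where
  "C1_submanifold d S \<longleftrightarrow> d \<le> CARD('n) \<and>
     (\<forall>p\<in>S. \<exists>V \<phi>. open V \<and> p \<in> V \<and>
        (\<forall>j < CARD('n) - d. Ck_on 1 V (\<phi> j)) \<and>
        S \<inter> V = {x\<in>V. \<forall>j < CARD('n) - d. \<phi> j x = 0} \<and>
        (\<forall>x\<in>S \<inter> V. inj_on (\<lambda>j. grad (\<phi> j) x) {..<CARD('n) - d} \<and>
                     independent ((\<lambda>j. grad (\<phi> j) x) ` {..<CARD('n) - d})))"

end

theory Submission
  imports Defs
begin

definition kS :: real where "kS = sin 1 - cos 1"
definition kC :: real where "kC = (1 - sin 1 * cos 1) / 2"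

lemma integ: "((\<lambda>x. (a*x - sin x)^2) has_integral (a^2/3 - 2 * a * kS + kC)) {0..1::real}"
proof -
  define \<Phi> where "\<Phi> x = a^2 * x^3/3 - 2*a*(sin x - x * cos x) + (x - sin x * cos x)/2" for x :: real
  have d: "(\<Phi> has_real_derivative (a*x - sin x)^2) (at x)" for x
  proof -
    have cc: "cos x * cos x = 1 - sin x * sin x" using sin_cos_squared_add[of x] by (simp add: power2_eq_square)
    show ?thesis unfolding \<Phi>_def[abs_def]
      apply (rule derivative_eq_intros refl | simp)+
      apply (simp add: power2_eq_square algebra_simps cc)
      done
  qed
  have "((\<lambda>x. (a*x - sin x)^2) has_integral (\<Phi> 1 - \<Phi> 0)) {0..1::real}"
    by (rule fundamental_theorem_of_calculus) (auto intro: d[THEN DERIV_subset] simp: has_real_derivative_iff_has_vector_derivative[symmetric])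
  moreover have "\<Phi> 1 - \<Phi> 0 = a^2/3 - 2 * a * kS + kC" by (simp add: \<Phi>_def kS_def kC_def algebra_simps)
  ultimately show ?thesis by simp
qed

lemma kS_pos: "kS > 0"
proof -
  have "cos 1 = sin (pi/2 - 1)" by (simp add: sin_cos_eq)
  also have "\<dots> < sin 1" using pi_gt3 pi_less_4 by (intro sin_monotone_2pi) auto
  finally show ?thesis by (simp add: kS_def)
qed


inductive sm :: "(real^'n \<Rightarrow> real) \<Rightarrow> bool" where
  sm_const: "sm (\<lambda>x. c)"
| sm_coord: "sm (\<lambda>x. x$i)"
| sm_add: "sm f \<Longrightarrow> sm g \<Longrightarrow> sm (\<lambda>x. f x + g x)"
| sm_mult: "sm f \<Longrightarrow> sm g \<Longrightarrow> sm (\<lambda>x. f x * g x)"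

lemma sm_diff: "sm f \<Longrightarrow> sm g \<Longrightarrow> sm (\<lambda>x. f x - g x)"
proof -
  assume "sm f" "sm g"
  then have "sm (\<lambda>x. f x + (-1) * g x)" by (intro sm.intros)
  then show ?thesis by simp
qed

lemma sm_pow: "sm f \<Longrightarrow> sm (\<lambda>x. f x ^ n)"
  by (induction n) (auto intro: sm.intros)

lemma sm_deriv: "sm f \<Longrightarrow> \<exists>g. (\<forall>x. (f has_derivative (\<lambda>h. g x \<bullet> h)) (at x)) \<and> (\<forall>i. sm (\<lambda>x. g x $ i))"
proof (induction rule: sm.induct)
  case (sm_const c)
  show ?case by (rule exI[of _ "\<lambda>x. 0"]) (auto intro: sm.intros)
next
  case (sm_coord i)
  have "((\<lambda>x::real^'a. x$i) has_derivative (\<lambda>h. axis i 1 \<bullet> h)) (at x)" for x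
    by (simp add: inner_axis' bounded_linear_vec_nth bounded_linear_imp_has_derivative)
  then show ?case by (intro exI[of _ "\<lambda>x. axis i 1"]) (auto intro: sm.intros)
next
  case (sm_add f g)
  then obtain gf gg where f: "\<forall>x. (f has_derivative (\<lambda>h. gf x \<bullet> h)) (at x)" "\<forall>i. sm (\<lambda>x. gf x $ i)"
    and g: "\<forall>x. (g has_derivative (\<lambda>h. gg x \<bullet> h)) (at x)" "\<forall>i. sm (\<lambda>x. gg x $ i)" by blast
  show ?case
  proof (intro exI[of _ "\<lambda>x. gf x + gg x"] conjI allI)
    fix x show "((\<lambda>x. f x + g x) has_derivative (\<lambda>h. (gf x + gg x) \<bullet> h)) (at x)"
      using has_derivative_add[OF f(1)[rule_format, of x] g(1)[rule_format, of x]] by (simp add: inner_add_left)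
  next
    fix i show "sm (\<lambda>x. (gf x + gg x) $ i)" using f(2) g(2) by (auto intro: sm.intros)
  qed
next
  case (sm_mult f g)
  then obtain gf gg where f: "\<forall>x. (f has_derivative (\<lambda>h. gf x \<bullet> h)) (at x)" "\<forall>i. sm (\<lambda>x. gf x $ i)"
    and g: "\<forall>x. (g has_derivative (\<lambda>h. gg x \<bullet> h)) (at x)" "\<forall>i. sm (\<lambda>x. gg x $ i)" by blast
  show ?case
  proof (intro exI[of _ "\<lambda>x. f x *\<^sub>R gg x + g x *\<^sub>R gf x"] conjI allI)
    fix x show "((\<lambda>x. f x * g x) has_derivative (\<lambda>h. (f x *\<^sub>R gg x + g x *\<^sub>R gf x) \<bullet> h)) (at x)"
      using has_derivative_mult[OF f(1)[rule_format, of x] g(1)[rule_format, of x]] by (simp add: inner_add_left algebra_simps)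
  next
    fix i show "sm (\<lambda>x. (f x *\<^sub>R gg x + g x *\<^sub>R gf x) $ i)" using f(2) g(2) sm_mult.hyps by (auto intro!: sm.sm_add sm.sm_mult)
  qed
qed

lemma sm_Ck: "sm f \<Longrightarrow> Ck_on k U f"
proof (induction k arbitrary: f)
  case 0
  then obtain g where "\<forall>x. (f has_derivative (\<lambda>h. g x \<bullet> h)) (at x)" using sm_deriv by blast
  then have "continuous_on UNIV f" by (meson continuous_at_imp_continuous_on has_derivative_continuous)
  then show ?case by (auto intro: continuous_on_subset)
next
  case (Suc k)
  then obtain g where "\<forall>x. (f has_derivative (\<lambda>h. g x \<bullet> h)) (at x)" "\<forall>i. sm (\<lambda>x. g x $ i)" using sm_deriv by blast
  then show ?case using Suc.IH by auto
qed

lemma Ck_cong: "open U \<Longrightarrow> (\<And>x. x \<in> U \<Longrightarrow> f x = g x) \<Longrightarrow> Ck_on k U f \<Longrightarrow> Ck_on k U g"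
proof (cases k)
  case 0
  assume "open U" "\<And>x. x \<in> U \<Longrightarrow> f x = g x" "Ck_on k U f"
  then show ?thesis using 0 continuous_on_cong by auto
next
  case (Suc k')
  assume U: "open U" and e: "\<And>x. x \<in> U \<Longrightarrow> f x = g x" and C: "Ck_on k U f"
  then obtain d where d: "\<forall>x\<in>U. (f has_derivative (\<lambda>h. d x \<bullet> h)) (at x)" "\<forall>i. Ck_on k' U (\<lambda>x. d x $ i)"
    using Suc by auto
  have "\<forall>x\<in>U. (g has_derivative (\<lambda>h. d x \<bullet> h)) (at x)"
    using d(1) U e by (auto intro: has_derivative_transform_within_open)
  then show ?thesis using Suc d(2) by auto
qed

lemma grad_eqI: "(\<phi> has_derivative (\<lambda>h. G \<bullet> h)) (at x) \<Longrightarrow> grad \<phi> x = G"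
proof -
  assume "(\<phi> has_derivative (\<lambda>h. G \<bullet> h)) (at x)"
  then have "frechet_derivative \<phi> (at x) = (\<lambda>h. G \<bullet> h)" by (metis frechet_derivative_at)
  then show ?thesis unfolding grad_def by (simp add: vec_eq_iff inner_axis)
qed

lemma rank1:
  fixes v :: "real^'n"
  assumes "c \<noteq> 0" "v \<noteq> 0"
  shows "rank (matrix (\<lambda>h. (c * (v \<bullet> h)) *\<^sub>R v)) = 1"
proof -
  let ?A = "matrix (\<lambda>h. (c * (v \<bullet> h)) *\<^sub>R v)"
  have r: "row i ?A = (c * v$i) *\<^sub>R v" for i
    by (simp add: row_def matrix_def vec_eq_iff inner_axis' inner_axis)
  have "rows ?A \<subseteq> span {v}" by (auto simp: rows_def r span_base span_scale)
  then have "dim (rows ?A) \<le> 1" using dim_le_card[of "rows ?A" "{v}"] by simp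
  moreover obtain i where "v$i \<noteq> 0" using assms(2) by (auto simp: vec_eq_iff)
  then have "row i ?A \<noteq> 0" using assms by (simp add: r)
  then have "\<not> rows ?A \<subseteq> {0}" by (auto simp: rows_def)
  then have "dim (rows ?A) \<noteq> 0" by simp
  ultimately show ?thesis unfolding row_rank_def by linarith
qed

lemma has_derivative_nth[derivative_intros]: "((\<lambda>x. x$i) has_derivative (\<lambda>h. h$i)) F"
  by (simp add: bounded_linear_vec_nth bounded_linear_imp_has_derivative)

definition sw :: "real^2 \<Rightarrow> real^2" where "sw v = v$2 *\<^sub>R axis 1 1 + v$1 *\<^sub>R axis 2 1"

lemma sw_nth[simp]: "sw v $ 1 = v $ 2" "sw v $ 2 = v $ 1"
  by (auto simp: sw_def axis_def)

lemma sw_nz: "v $ 1 \<noteq> 0 \<Longrightarrow> sw v \<noteq> 0"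
  by (metis sw_nth(2) zero_index)

lemma sw_inner: "sw v \<bullet> h = h $ 1 * v $ 2 + v $ 1 * h $ 2"
  by (simp add: inner_vec_def sum_2 algebra_simps)

definition GQ :: "real \<Rightarrow> real \<Rightarrow> real^2 \<Rightarrow> real^2" where
  "GQ A B v = (2 * A * (v$1 * v$2) + B) *\<^sub>R sw v"

lemma Q_deriv: "((\<lambda>v::real^2. A * (v$1 * v$2)^2 + B * (v$1 * v$2) + C) has_derivative (\<lambda>h. GQ A B v \<bullet> h)) (at v)"
proof -
  have "((\<lambda>v::real^2. A * (v$1 * v$2)^2 + B * (v$1 * v$2) + C) has_derivative
     (\<lambda>h. A * (2 * (v$1 * v$2) * (h$1 * v$2 + v$1 * h$2)) + B * (h$1 * v$2 + v$1 * h$2))) (at v)"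
    by (auto intro!: derivative_eq_intros simp: power2_eq_square algebra_simps)
  moreover have "(\<lambda>h. A * (2 * (v$1 * v$2) * (h$1 * v$2 + v$1 * h$2)) + B * (h$1 * v$2 + v$1 * h$2)) = (\<lambda>h. GQ A B v \<bullet> h)"
    by (auto simp: GQ_def sw_inner algebra_simps)
  ultimately show ?thesis by simp
qed

lemma GQ_deriv: "((GQ A B) has_derivative (\<lambda>h. (2 * A * (sw v \<bullet> h)) *\<^sub>R sw v + (2 * A * (v$1 * v$2) + B) *\<^sub>R sw h)) (at v)"
proof -
  have "((GQ A B) has_derivative (\<lambda>h. (2 * A * (h$1 * v$2 + v$1 * h$2)) *\<^sub>R sw v + (2 * A * (v$1 * v$2) + B) *\<^sub>R sw h)) (at v)"
    unfolding GQ_def[abs_def] sw_def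
    by (rule derivative_eq_intros refl | simp)+ (simp add: algebra_simps)
  then show ?thesis by (simp add: sw_inner)
qed


lemma norm_sw: "norm (sw v) = norm v"
  by (simp add: norm_eq_sqrt_inner sw_inner inner_vec_def sum_2 algebra_simps)


lemma max_lin: "0 \<le> (x::real) \<Longrightarrow> max (t * x) 0 = max t 0 * x"
  by (cases "t \<ge> 0") (auto simp: max_def mult_nonneg_nonneg mult_le_0_iff)

lemma bnd_sq: "\<bar>t::real\<bar> \<le> R \<Longrightarrow> t^2 \<le> R^2"
  by (metis abs_le_square_iff abs_of_nonneg abs_ge_zero order_trans)

lemma abs_mult_le: "\<bar>a::real\<bar> \<le> A \<Longrightarrow> \<bar>b\<bar> \<le> Bb \<Longrightarrow> \<bar>a * b\<bar> \<le> A * Bb"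
  by (simp add: abs_mult mult_mono')

lemma max_abs: "0 \<le> (x::real) \<Longrightarrow> x \<le> 1 \<Longrightarrow> \<bar>max (t * x) 0\<bar> \<le> \<bar>t\<bar>"
proof -
  assume a: "0 \<le> x" "x \<le> 1"
  have "\<bar>max (t * x) 0\<bar> \<le> \<bar>t * x\<bar>" by (simp add: max_def)
  also have "\<dots> \<le> \<bar>t\<bar>" using a by (simp add: abs_mult mult_left_le)
  finally show ?thesis .
qed

lemma Fbound:
  fixes t1 t2 x B :: real
  assumes "0 \<le> x" "x \<le> 1" "\<bar>t1\<bar> \<le> B" "\<bar>t2\<bar> \<le> B"
  shows "\<bar>t2 * max (t1 * x) 0 - sin x\<bar> \<le> B^2 + 1"
proof -
  have "\<bar>max (t1 * x) 0\<bar> \<le> B"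
  proof -
    have "\<bar>max (t1 * x) 0\<bar> \<le> \<bar>t1 * x\<bar>" by (simp add: max_def)
    also have "\<dots> \<le> \<bar>t1\<bar>" using assms by (simp add: abs_mult mult_left_le)
    finally show ?thesis using assms by simp
  qed
  then have "\<bar>t2 * max (t1 * x) 0\<bar> \<le> B * B" using abs_mult_le assms(4) by blast
  moreover have "\<bar>sin x\<bar> \<le> 1" by simp
  ultimately show ?thesis using abs_triangle_ineq4[of "t2 * max (t1 * x) 0" "sin x"] by (simp only: power2_eq_square)
qed

lemma lipF:
  fixes u1 u2 v1 v2 x B d :: real
  assumes "0 \<le> x" "x \<le> 1" "\<bar>u1\<bar> \<le> B" "\<bar>u2\<bar> \<le> B" "\<bar>v1\<bar> \<le> B" "\<bar>v2\<bar> \<le> B"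
    and "\<bar>u1 - v1\<bar> \<le> d" "\<bar>u2 - v2\<bar> \<le> d"
  shows "\<bar>\<bar>u2 * max (u1 * x) 0 - sin x\<bar>^2 - \<bar>v2 * max (v1 * x) 0 - sin x\<bar>^2\<bar> \<le> (2 * B) * (2 * B^2 + 2) * d"
proof -
  define P where "P = u2 * max (u1 * x) 0"
  define Q where "Q = v2 * max (v1 * x) 0"
  have mu: "\<bar>max (u1 * x) 0\<bar> \<le> B" "\<bar>max (v1 * x) 0\<bar> \<le> B"
    using assms max_abs[of x u1] max_abs[of x v1] by auto
  have md: "\<bar>max (u1 * x) 0 - max (v1 * x) 0\<bar> \<le> d"
  proof -
    have "\<bar>max (u1 * x) 0 - max (v1 * x) 0\<bar> \<le> \<bar>u1 * x - v1 * x\<bar>" by (simp add: max_def)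
    also have "\<dots> = \<bar>u1 - v1\<bar> * x" using assms by (simp add: left_diff_distrib[symmetric] abs_mult)
    also have "\<dots> \<le> \<bar>u1 - v1\<bar>" using assms by (simp add: mult_left_le)
    finally show ?thesis using assms by simp
  qed
  have "P - Q = u2 * (max (u1 * x) 0 - max (v1 * x) 0) + (u2 - v2) * max (v1 * x) 0"
    by (simp add: P_def Q_def algebra_simps)
  then have t: "\<bar>P - Q\<bar> \<le> \<bar>u2 * (max (u1 * x) 0 - max (v1 * x) 0)\<bar> + \<bar>(u2 - v2) * max (v1 * x) 0\<bar>"
    by (simp only: abs_triangle_ineq)
  have a: "\<bar>u2 * (max (u1 * x) 0 - max (v1 * x) 0)\<bar> \<le> B * d" using abs_mult_le[OF assms(4) md] .
  have b: "\<bar>(u2 - v2) * max (v1 * x) 0\<bar> \<le> d * B" using abs_mult_le[OF assms(8) mu(2)] .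
  have "\<bar>P - Q\<bar> \<le> B * d + d * B" using t a b by (meson add_mono order_trans)
  then have PQ: "\<bar>P - Q\<bar> \<le> 2 * B * d" by simp
  have "\<bar>P\<bar> \<le> B * B" "\<bar>Q\<bar> \<le> B * B"
    using abs_mult_le[OF assms(4) mu(1)] abs_mult_le[OF assms(6) mu(2)] by (auto simp: P_def Q_def)
  moreover have "\<bar>sin x\<bar> \<le> 1" by simp
  ultimately have S: "\<bar>P + Q - 2 * sin x\<bar> \<le> 2 * B^2 + 2" unfolding power2_eq_square by (smt (verit))
  have "\<bar>P - sin x\<bar>^2 - \<bar>Q - sin x\<bar>^2 = (P - Q) * (P + Q - 2 * sin x)"
    by (simp add: power2_eq_square algebra_simps)
  then have "\<bar>\<bar>P - sin x\<bar>^2 - \<bar>Q - sin x\<bar>^2\<bar> \<le> (2 * B * d) * (2 * B^2 + 2)"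
    using abs_mult_le[OF PQ S] by simp
  then show ?thesis by (simp add: P_def Q_def algebra_simps)
qed

theorem proposition7p2:
  fixes M :: "'a measure"
    and X :: "nat \<Rightarrow> nat \<Rightarrow> 'a \<Rightarrow> real"
    and f :: "real^2 \<Rightarrow> real"
    and F :: "real^2 \<Rightarrow> real \<Rightarrow> real"
    and \<M> :: "(real^2) set"
  assumes "prob_space M"
    and "\<And>n m. \<forall>\<omega>\<in>space M. X n m \<omega> \<in> {0..1}"
    and "prob_space.indep_vars M (\<lambda>_. borel) (\<lambda>(n, m). X n m) UNIV"
    and "\<And>n m. distributed M lborel (X n m) (\<lambda>x. indicator {0..1::real} x)"
    and f_def: "\<And>\<theta>. f \<theta> = integral {0..1} (\<lambda>x. \<bar>\<theta>$2 * max (\<theta>$1 * x) 0 - sin x\<bar>^2)"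
    and F_def: "\<And>\<theta> x. F \<theta> x = \<bar>\<theta>$2 * max (\<theta>$1 * x) 0 - sin x\<bar>^2"
    and M_def: "\<M> = {\<theta>. f \<theta> = (INF v. f v)}"
  shows
    "(\<forall>\<theta>. f \<theta> = (\<integral>\<omega>. F \<theta> (X 1 1 \<omega>) \<partial>M) \<and>
          (\<integral>\<^sup>+\<omega>. ennreal (\<bar>F \<theta> (X 1 1 \<omega>)\<bar>^2) \<partial>M) < \<infinity>) \<and>
     (\<forall>x\<in>{0..1}. \<forall>\<theta>. \<exists>r>0. \<exists>L. L-lipschitz_on (ball \<theta> r) (\<lambda>v. F v x)) \<and>
     (\<exists>U. open U \<and> Ck_on 3 U f \<and>
        (\<forall>C. C \<noteq> {} \<longrightarrow> compact C \<longrightarrow> C \<subseteq> U \<longrightarrow>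
           (SUP \<theta>\<in>C. \<integral>\<^sup>+\<omega>. ennreal (\<bar>F \<theta> (X 1 1 \<omega>)\<bar>^2
                 + norm (grad (\<lambda>v. F v (X 1 1 \<omega>)) \<theta>)^2) \<partial>M) < \<infinity>) \<and>
        \<M> \<inter> U \<noteq> {} \<and> C1_submanifold 1 (\<M> \<inter> U) \<and>
        (\<forall>\<theta>\<in>\<M> \<inter> U. rank (hessian f \<theta>) = 1))"
  proof -
  interpret P: prob_space M by (rule assms(1))
  have dist: "distributed M lborel (X 1 1) (\<lambda>x. ennreal (indicator {0..1::real} x))"
    using assms(4)[of 1 1] by (simp add: ennreal_indicator)
  have Xr: "0 \<le> X 1 1 \<omega> \<and> X 1 1 \<omega> \<le> 1" if "\<omega> \<in> space M" for \<omega> using assms(2) that by auto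
  define a where "a \<theta> = \<theta>$2 * max (\<theta>$1) 0" for \<theta> :: "real^2"
  have fform: "f \<theta> = (a \<theta>)^2/3 - 2 * a \<theta> * kS + kC" for \<theta>
  proof -
    have "f \<theta> = integral {0..1} (\<lambda>x. (a \<theta> * x - sin x)^2)"
      unfolding f_def by (rule integral_cong) (simp add: a_def max_lin mult.assoc)
    also have "\<dots> = (a \<theta>)^2/3 - 2 * a \<theta> * kS + kC" using integ by (rule integral_unique)
    finally show ?thesis .
  qed
  define m where "m = kC - 3 * kS^2"
  have fm: "f \<theta> - m = (a \<theta> - 3 * kS)^2/3" for \<theta>
    by (simp add: fform m_def power2_eq_square field_simps)
  have fge: "m \<le> f \<theta>" for \<theta>
  proof -
    have "0 \<le> (a \<theta> - 3 * kS)^2/3" by simp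
    then show ?thesis using fm[of \<theta>] by linarith
  qed
  define \<theta>0 where "\<theta>0 = (vector [1, 3 * kS] :: real^2)"
  have a0: "a \<theta>0 = 3 * kS" by (simp add: a_def \<theta>0_def)
  have f0: "f \<theta>0 = m" using fm[of \<theta>0] a0 by simp
  have inf: "(INF v. f v) = m"
  proof (rule antisym)
    have "(INF v. f v) \<le> f \<theta>0" by (rule cINF_lower) (auto intro: bdd_belowI2[of _ m] fge)
    then show "(INF v. f v) \<le> m" using f0 by simp
    show "m \<le> (INF v. f v)" by (rule cINF_greatest) (auto simp: fge)
  qed
  have Mchar: "\<theta> \<in> \<M> \<longleftrightarrow> a \<theta> = 3 * kS" for \<theta>
  proof -
    have "\<theta> \<in> \<M> \<longleftrightarrow> f \<theta> = m" by (simp add: M_def inf)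
    also have "\<dots> \<longleftrightarrow> (a \<theta> - 3 * kS)^2 = 0" using fm[of \<theta>] by auto
    finally show ?thesis by simp
  qed
  define U where "U = {\<theta>::real^2. \<theta>$1 > 0}"
  have openU: "open U" by (simp add: U_def open_halfspace_component_gt_cart)
  have aU: "a \<theta> = \<theta>$1 * \<theta>$2" if "\<theta> \<in> U" for \<theta> using that by (simp add: a_def U_def max_def)
  have fU: "(1/3) * (\<theta>$1 * \<theta>$2)^2 + (-2 * kS) * (\<theta>$1 * \<theta>$2) + kC = f \<theta>" if "\<theta> \<in> U" for \<theta>
    using that by (simp add: fform aU)
  have Feq: "F \<theta> = (\<lambda>x. \<bar>\<theta>$2 * max (\<theta>$1 * x) 0 - sin x\<bar>^2)" for \<theta> by (rule ext) (simp add: F_def)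
  have Fcont: "continuous_on UNIV (F \<theta>)" for \<theta> unfolding Feq by (intro continuous_intros)

  have part1: "f \<theta> = (\<integral>\<omega>. F \<theta> (X 1 1 \<omega>) \<partial>M) \<and> (\<integral>\<^sup>+\<omega>. ennreal (\<bar>F \<theta> (X 1 1 \<omega>)\<bar>^2) \<partial>M) < \<infinity>" for \<theta>
  proof
    have meas: "F \<theta> \<in> borel_measurable lborel" using Fcont by (simp add: borel_measurable_continuous_onI)
    have "(\<integral>\<omega>. F \<theta> (X 1 1 \<omega>) \<partial>M) = (\<integral>x. indicator {0..1} x * F \<theta> x \<partial>lborel)"
      using distributed_integral[OF dist meas] by simp
    also have "\<dots> = (LINT x:{0..1}|lborel. F \<theta> x)" by (simp add: set_lebesgue_integral_def)
    also have "\<dots> = integral {0..1} (F \<theta>)"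
      by (rule set_borel_integral_eq_integral(2)) (unfold set_integrable_def, rule borel_integrable_compact, auto intro: continuous_on_subset[OF Fcont])
    also have "\<dots> = f \<theta>" by (simp add: f_def Feq)
    finally show "f \<theta> = (\<integral>\<omega>. F \<theta> (X 1 1 \<omega>) \<partial>M)" by simp
  next
    define B where "B = norm \<theta>"
    have cb: "\<bar>\<theta>$1\<bar> \<le> B" "\<bar>\<theta>$2\<bar> \<le> B" by (simp_all add: B_def component_le_norm_cart)
    have pt: "\<bar>F \<theta> x\<bar>^2 \<le> ((B^2+1)^2)^2" if "0 \<le> x" "x \<le> 1" for x
    proof -
      have "\<bar>\<theta>$2 * max (\<theta>$1 * x) 0 - sin x\<bar> \<le> B^2 + 1" by (rule Fbound) (use cb that in auto)
      then have "\<bar>\<theta>$2 * max (\<theta>$1 * x) 0 - sin x\<bar>^2 \<le> (B^2+1)^2" by (rule power_mono) simp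
      then have "(\<bar>\<theta>$2 * max (\<theta>$1 * x) 0 - sin x\<bar>^2)^2 \<le> ((B^2+1)^2)^2" by (rule power_mono) simp
      then show ?thesis by (simp add: F_def)
    qed
    have "(\<integral>\<^sup>+\<omega>. ennreal (\<bar>F \<theta> (X 1 1 \<omega>)\<bar>^2) \<partial>M) \<le> (\<integral>\<^sup>+\<omega>. ennreal (((B^2+1)^2)^2) \<partial>M)"
      by (rule nn_integral_mono) (use pt Xr in \<open>auto intro: ennreal_leI\<close>)
    also have "\<dots> = ennreal (((B^2+1)^2)^2)" by (simp add: P.emeasure_space_1)
    finally show "(\<integral>\<^sup>+\<omega>. ennreal (\<bar>F \<theta> (X 1 1 \<omega>)\<bar>^2) \<partial>M) < \<infinity>"
      unfolding infinity_ennreal_def by (rule le_less_trans[OF _ ennreal_less_top])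
  qed

  have part2: "\<exists>r>0. \<exists>L. L-lipschitz_on (ball \<theta> r) (\<lambda>v. F v x)" if x: "x \<in> {0..1}" for x \<theta>
  proof (intro exI conjI)
    define B where "B = norm \<theta> + 1"
    have nb: "\<bar>v$i\<bar> \<le> B" if "v \<in> ball \<theta> 1" for v i
    proof -
      have "norm v \<le> norm \<theta> + dist \<theta> v" using norm_triangle_sub[of v \<theta>] by (simp add: dist_norm norm_minus_commute)
      then show ?thesis using that component_le_norm_cart[of v i] by (simp add: B_def)
    qed
    show "(2 * B * (2 * B^2 + 2))-lipschitz_on (ball \<theta> 1) (\<lambda>v. F v x)"
    proof (rule lipschitz_onI)
      fix u v assume uv: "u \<in> ball \<theta> 1" "v \<in> ball \<theta> 1"
      have d: "\<bar>u$i - v$i\<bar> \<le> dist u v" for i using dist_vec_nth_le[of u i v] by (simp add: dist_real_def)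
      show "dist (F u x) (F v x) \<le> 2 * B * (2 * B^2 + 2) * dist u v"
        unfolding dist_real_def F_def by (rule lipF) (use x nb[OF uv(1)] nb[OF uv(2)] d in auto)
    next
      have "0 \<le> B" by (simp add: B_def)
      then show "0 \<le> 2 * B * (2 * B^2 + 2)" by simp
    qed
  qed (simp)

  have Ck: "Ck_on 3 U f"
    by (rule Ck_cong[OF openU fU], assumption) (intro sm_Ck sm.intros sm_pow)
  have supb: "(SUP \<theta>\<in>C. \<integral>\<^sup>+\<omega>. ennreal (\<bar>F \<theta> (X 1 1 \<omega>)\<bar>^2
                 + norm (grad (\<lambda>v. F v (X 1 1 \<omega>)) \<theta>)^2) \<partial>M) < \<infinity>"
    if C: "C \<noteq> {}" "compact C" "C \<subseteq> U" for C
  proof -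
    obtain B where B: "B > 0" "\<forall>\<theta>\<in>C. norm \<theta> \<le> B" using compact_imp_bounded[OF C(2)] bounded_pos by blast
    define R where "R = B^2 + 1"
    define K where "K = (R^2)^2 + (2 * R * B)^2"
    have pt: "\<bar>F \<theta> x\<bar>^2 + norm (grad (\<lambda>v. F v x) \<theta>)^2 \<le> K" if th: "\<theta> \<in> C" and x: "0 \<le> x" "x \<le> 1" for \<theta> x
    proof -
      have \<theta>U: "\<theta> \<in> U" using th C by auto
      have nt: "norm \<theta> \<le> B" using B th by auto
      have cb: "\<bar>\<theta>$1\<bar> \<le> B" "\<bar>\<theta>$2\<bar> \<le> B" using nt component_le_norm_cart order_trans by blast+
      have Fe: "x^2 * (v$1 * v$2)^2 + (-2 * x * sin x) * (v$1 * v$2) + (sin x)^2 = F v x" if "v \<in> U" for v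
      proof -
        have "max (v$1 * x) 0 = v$1 * x" using that x by (intro max_absorb1) (auto simp: U_def intro: mult_nonneg_nonneg)
        then show ?thesis by (simp add: F_def power2_eq_square algebra_simps)
      qed
      have gr: "grad (\<lambda>v. F v x) \<theta> = GQ (x^2) (-2 * x * sin x) \<theta>"
        by (rule grad_eqI, rule has_derivative_transform_within_open[OF Q_deriv openU \<theta>U]) (use Fe in simp)
      define t where "t = \<theta>$2 * max (\<theta>$1 * x) 0 - sin x"
      have mx: "max (\<theta>$1 * x) 0 = \<theta>$1 * x" using \<theta>U x by (intro max_absorb1) (auto simp: U_def intro: mult_nonneg_nonneg)
      have gr2: "grad (\<lambda>v. F v x) \<theta> = (2 * x * t) *\<^sub>R sw \<theta>"
        unfolding gr GQ_def t_def mx by (simp add: power2_eq_square algebra_simps)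
      have tR: "\<bar>t\<bar> \<le> R" unfolding t_def R_def by (rule Fbound) (use cb x in auto)
      have "t^2 \<le> R^2" using tR by (rule bnd_sq)
      then have A0: "(t^2)^2 \<le> (R^2)^2" by (rule power_mono) simp
      then have A1: "\<bar>F \<theta> x\<bar>^2 \<le> (R^2)^2" by (simp add: F_def t_def[symmetric])
      have "x * \<bar>t\<bar> \<le> \<bar>t\<bar>" using x by (intro mult_left_le_one_le) auto
      then have "\<bar>2 * x * t\<bar> \<le> 2 * R" using tR x by (simp add: abs_mult)
      then have "\<bar>2 * x * t\<bar> * norm \<theta> \<le> 2 * R * B" using nt by (rule mult_mono) (auto simp: R_def)
      then have "norm (grad (\<lambda>v. F v x) \<theta>) \<le> 2 * R * B" by (simp add: gr2 norm_sw)
      then have A2: "norm (grad (\<lambda>v. F v x) \<theta>)^2 \<le> (2 * R * B)^2" by (rule power_mono) simp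
      show ?thesis using A1 A2 by (simp add: K_def)
    qed
    have "(\<integral>\<^sup>+\<omega>. ennreal (\<bar>F \<theta> (X 1 1 \<omega>)\<bar>^2 + norm (grad (\<lambda>v. F v (X 1 1 \<omega>)) \<theta>)^2) \<partial>M) \<le> ennreal K"
      if "\<theta> \<in> C" for \<theta>
    proof -
      have "(\<integral>\<^sup>+\<omega>. ennreal (\<bar>F \<theta> (X 1 1 \<omega>)\<bar>^2 + norm (grad (\<lambda>v. F v (X 1 1 \<omega>)) \<theta>)^2) \<partial>M) \<le> (\<integral>\<^sup>+\<omega>. ennreal K \<partial>M)"
        by (rule nn_integral_mono, rule ennreal_leI, rule pt) (use Xr that in auto)
      also have "\<dots> = ennreal K" by (simp add: P.emeasure_space_1)
      finally show ?thesis .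
    qed
    then have "(SUP \<theta>\<in>C. \<integral>\<^sup>+\<omega>. ennreal (\<bar>F \<theta> (X 1 1 \<omega>)\<bar>^2 + norm (grad (\<lambda>v. F v (X 1 1 \<omega>)) \<theta>)^2) \<partial>M) \<le> ennreal K"
      by (rule SUP_least)
    then show ?thesis unfolding infinity_ennreal_def by (rule le_less_trans[OF _ ennreal_less_top])
  qed
  have \<theta>0U: "\<theta>0 \<in> \<M> \<inter> U" using a0 by (simp add: Mchar U_def \<theta>0_def)
  have MU: "\<theta> \<in> \<M> \<inter> U \<longleftrightarrow> \<theta> \<in> U \<and> \<theta>$1 * \<theta>$2 - 3 * kS = 0" for \<theta>
    using aU[of \<theta>] by (auto simp: Mchar)
  have phi_eq: "(\<lambda>v::real^2. v$1 * v$2 - 3 * kS) = (\<lambda>v. 0 * (v$1 * v$2)^2 + 1 * (v$1 * v$2) + (- 3 * kS))"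
    by auto
  have gphi: "grad (\<lambda>v::real^2. v$1 * v$2 - 3 * kS) x = sw x" for x
    unfolding phi_eq by (rule grad_eqI, rule Q_deriv[THEN has_derivative_eq_rhs]) (simp add: GQ_def)
  have subm: "C1_submanifold 1 (\<M> \<inter> U)"
    unfolding C1_submanifold_def
  proof (intro conjI ballI)
    show "1 \<le> CARD(2)" by simp
    fix p assume "p \<in> \<M> \<inter> U"
    then have pU: "p \<in> U" by simp
    have Ckphi: "Ck_on 1 U (\<lambda>v::real^2. v$1 * v$2 - 3 * kS)" by (intro sm_Ck sm_diff sm.intros)
    have ind: "independent {sw x}" if "x \<in> U" for x
      using sw_nz[of x] that by (simp add: U_def independent_insert)
    show "\<exists>V \<phi>. open V \<and> p \<in> V \<and> (\<forall>j < CARD(2) - 1. Ck_on 1 V (\<phi> j)) \<and>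
        \<M> \<inter> U \<inter> V = {x\<in>V. \<forall>j < CARD(2) - 1. \<phi> j x = 0} \<and>
        (\<forall>x\<in>\<M> \<inter> U \<inter> V. inj_on (\<lambda>j. grad (\<phi> j) x) {..<CARD(2) - 1} \<and>
                     independent ((\<lambda>j. grad (\<phi> j) x) ` {..<CARD(2) - 1}))"
    proof (intro exI[of _ U] exI[of _ "\<lambda>j v. v$1 * v$2 - 3 * kS"] conjI)
      show "open U" by (rule openU)
      show "p \<in> U" by (rule pU)
      show "\<forall>j < CARD(2) - 1. Ck_on 1 U (\<lambda>v::real^2. v$1 * v$2 - 3 * kS)" using Ckphi by simp
      show "\<M> \<inter> U \<inter> U = {x\<in>U. \<forall>j < CARD(2) - 1. x$1 * x$2 - 3 * kS = 0}" using MU by auto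
      show "\<forall>x\<in>\<M> \<inter> U \<inter> U. inj_on (\<lambda>j. grad (\<lambda>v::real^2. v$1 * v$2 - 3 * kS) x) {..<CARD(2) - 1} \<and>
                     independent ((\<lambda>j. grad (\<lambda>v::real^2. v$1 * v$2 - 3 * kS) x) ` {..<CARD(2) - 1})"
        using ind by (simp add: gphi lessThan_Suc)
    qed
  qed
  have hess: "rank (hessian f \<theta>) = 1" if th: "\<theta> \<in> \<M> \<inter> U" for \<theta>
  proof -
    have \<theta>U: "\<theta> \<in> U" using th by simp
    have p3: "\<theta>$1 * \<theta>$2 = 3 * kS" using th MU by auto
    have gU: "GQ (1/3) (-2 * kS) y = grad f y" if "y \<in> U" for y
      by (rule sym, rule grad_eqI, rule has_derivative_transform_within_open[OF Q_deriv openU that]) (use fU in simp)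
    have hd: "(grad f has_derivative (\<lambda>h. ((2/3) * (sw \<theta> \<bullet> h)) *\<^sub>R sw \<theta>)) (at \<theta>)"
      by (rule has_derivative_transform_within_open[OF GQ_deriv[THEN has_derivative_eq_rhs] openU \<theta>U gU])
         (simp add: p3)
    have "hessian f \<theta> = matrix (\<lambda>h. ((2/3) * (sw \<theta> \<bullet> h)) *\<^sub>R sw \<theta>)"
      unfolding hessian_def jacobian_def using frechet_derivative_at[OF hd] by simp
    then show ?thesis using rank1[of "2/3" "sw \<theta>"] sw_nz[of \<theta>] \<theta>U by (simp add: U_def)
  qed
  show ?thesis
    apply (intro conjI)
    subgoal using part1 by blast
    subgoal using part2 by blast
    apply (rule exI[of _ U])
    apply (intro conjI allI impI ballI)
    using openU Ck supb \<theta>0U subm hess by auto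
qed

end
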